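(* Let $G$ be a right $\ell$-group with a strong order unit $s$, and let $g \in G^-$. Put $k = \min\{ i \geq 0 : g \geq s^{-i}\}$. Then $g$ has a unique left-normal factorization $g = h_1 h_2 \cdots h_k$. Its factors are \[ h_i = (g \curlyvee s^{-(i-1)})^{-1}(g \curlyvee s^{-i}) \qquad (1 \leq i \leq k), \] where $a \curlyvee b := (a^{-1} \wedge b^{-1})^{-1}$.
   Context: A right $\ell$-group is a group $G$ (identity $e$) with a partial order $\leq$ that is right-invariant ($x \leq y \Rightarrow xz \leq yz$) and under which $G$ is a lattice with meet $\wedge$ and join $\vee$. $G^- := \{g \in G : g \leq e\}$, and $[a,b] := \{x : a \leq x \leq b\}$. An element $s$ is normal if $x \mapsto sx$ is a lattice automorphism of $G$. It is a strong order unit if $s > e$, $s$ is normal, and every $g \in G$ satisfies $g \leq s^k$ for some $k \in \mathbb{Z}$. For $g \in G^-$, a left-normal factorization of $g$ is a finite sequence $h_1,\dots,h_k \in [s^{-1},e]$ satisfying three conditions: (1) $g = h_1 \cdots h_{k-1} h_k$; (2) $h_i \neq e$ for all $i$; (3) for each $1 \leq i < k$ there do not exist $h,h' \in G^-$ with $h \neq e$, $hh' = h_{i+1}$ and $h_i h \in [s^{-1},e]$. *)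

theory Defs
  imports "HOL-Algebra.Group"
begin

definition is_glb :: "('a, 'b) monoid_scheme \<Rightarrow> ('a \<Rightarrow> 'a \<Rightarrow> bool) \<Rightarrow> 'a \<Rightarrow> 'a \<Rightarrow> 'a \<Rightarrow> bool" where
  "is_glb G leq x y z \<longleftrightarrow> z \<in> carrier G \<and> leq z x \<and> leq z y \<and>
     (\<forall>w\<in>carrier G. leq w x \<and> leq w y \<longrightarrow> leq w z)"

definition is_lub :: "('a, 'b) monoid_scheme \<Rightarrow> ('a \<Rightarrow> 'a \<Rightarrow> bool) \<Rightarrow> 'a \<Rightarrow> 'a \<Rightarrow> 'a \<Rightarrow> bool" where
  "is_lub G leq x y z \<longleftrightarrow> z \<in> carrier G \<and> leq x z \<and> leq y z \<and>
     (\<forall>w\<in>carrier G. leq x w \<and> leq y w \<longrightarrow> leq z w)"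

definition right_lgroup :: "('a, 'b) monoid_scheme \<Rightarrow> ('a \<Rightarrow> 'a \<Rightarrow> bool) \<Rightarrow> bool" where
  "right_lgroup G leq \<longleftrightarrow> group G \<and>
     (\<forall>x\<in>carrier G. leq x x) \<and>
     (\<forall>x\<in>carrier G. \<forall>y\<in>carrier G. leq x y \<and> leq y x \<longrightarrow> x = y) \<and>
     (\<forall>x\<in>carrier G. \<forall>y\<in>carrier G. \<forall>z\<in>carrier G. leq x y \<and> leq y z \<longrightarrow> leq x z) \<and>
     (\<forall>x\<in>carrier G. \<forall>y\<in>carrier G. \<forall>z\<in>carrier G. leq x y \<longrightarrow> leq (x \<otimes>\<^bsub>G\<^esub> z) (y \<otimes>\<^bsub>G\<^esub> z)) \<and>
     (\<forall>x\<in>carrier G. \<forall>y\<in>carrier G. (\<exists>z. is_glb G leq x y z) \<and> (\<exists>z. is_lub G leq x y z))"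

definition lmeet :: "('a, 'b) monoid_scheme \<Rightarrow> ('a \<Rightarrow> 'a \<Rightarrow> bool) \<Rightarrow> 'a \<Rightarrow> 'a \<Rightarrow> 'a" where
  "lmeet G leq x y = (THE z. is_glb G leq x y z)"

definition ljoin :: "('a, 'b) monoid_scheme \<Rightarrow> ('a \<Rightarrow> 'a \<Rightarrow> bool) \<Rightarrow> 'a \<Rightarrow> 'a \<Rightarrow> 'a" where
  "ljoin G leq x y = (THE z. is_lub G leq x y z)"

definition cvee :: "('a, 'b) monoid_scheme \<Rightarrow> ('a \<Rightarrow> 'a \<Rightarrow> bool) \<Rightarrow> 'a \<Rightarrow> 'a \<Rightarrow> 'a" where
  "cvee G leq a b = inv\<^bsub>G\<^esub> (lmeet G leq (inv\<^bsub>G\<^esub> a) (inv\<^bsub>G\<^esub> b))"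

definition normal_elem :: "('a, 'b) monoid_scheme \<Rightarrow> ('a \<Rightarrow> 'a \<Rightarrow> bool) \<Rightarrow> 'a \<Rightarrow> bool" where
  "normal_elem G leq s \<longleftrightarrow> s \<in> carrier G \<and>
     bij_betw (\<lambda>x. s \<otimes>\<^bsub>G\<^esub> x) (carrier G) (carrier G) \<and>
     (\<forall>x\<in>carrier G. \<forall>y\<in>carrier G.
        s \<otimes>\<^bsub>G\<^esub> lmeet G leq x y = lmeet G leq (s \<otimes>\<^bsub>G\<^esub> x) (s \<otimes>\<^bsub>G\<^esub> y) \<and>
        s \<otimes>\<^bsub>G\<^esub> ljoin G leq x y = ljoin G leq (s \<otimes>\<^bsub>G\<^esub> x) (s \<otimes>\<^bsub>G\<^esub> y))"

definition strong_order_unit :: "('a, 'b) monoid_scheme \<Rightarrow> ('a \<Rightarrow> 'a \<Rightarrow> bool) \<Rightarrow> 'a \<Rightarrow> bool" where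
  "strong_order_unit G leq s \<longleftrightarrow> s \<in> carrier G \<and>
     leq \<one>\<^bsub>G\<^esub> s \<and> s \<noteq> \<one>\<^bsub>G\<^esub> \<and> normal_elem G leq s \<and>
     (\<forall>g\<in>carrier G. \<exists>k::int. leq g (s [^]\<^bsub>G\<^esub> k))"

definition neg_cone :: "('a, 'b) monoid_scheme \<Rightarrow> ('a \<Rightarrow> 'a \<Rightarrow> bool) \<Rightarrow> 'a set" where
  "neg_cone G leq = {g \<in> carrier G. leq g \<one>\<^bsub>G\<^esub>}"

definition interv :: "('a, 'b) monoid_scheme \<Rightarrow> ('a \<Rightarrow> 'a \<Rightarrow> bool) \<Rightarrow> 'a \<Rightarrow> 'a \<Rightarrow> 'a set" where
  "interv G leq a b = {x \<in> carrier G. leq a x \<and> leq x b}"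

definition lprod :: "('a, 'b) monoid_scheme \<Rightarrow> 'a list \<Rightarrow> 'a" where
  "lprod G hs = foldr (\<lambda>h acc. h \<otimes>\<^bsub>G\<^esub> acc) hs \<one>\<^bsub>G\<^esub>"

text \<open>Left-normal factorization h_1,...,h_k (list hs, h_i = hs ! (i-1)) of g w.r.t. s.\<close>
definition left_normal_fact :: "('a, 'b) monoid_scheme \<Rightarrow> ('a \<Rightarrow> 'a \<Rightarrow> bool) \<Rightarrow> 'a \<Rightarrow> 'a \<Rightarrow> 'a list \<Rightarrow> bool" where
  "left_normal_fact G leq s g hs \<longleftrightarrow>
     set hs \<subseteq> interv G leq (inv\<^bsub>G\<^esub> s) \<one>\<^bsub>G\<^esub> \<and>
     g = lprod G hs \<and>
     (\<forall>h\<in>set hs. h \<noteq> \<one>\<^bsub>G\<^esub>) \<and>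
     (\<forall>i. i + 1 < length hs \<longrightarrow>
        \<not> (\<exists>h\<in>neg_cone G leq. \<exists>h'\<in>neg_cone G leq. h \<noteq> \<one>\<^bsub>G\<^esub> \<and>
              h \<otimes>\<^bsub>G\<^esub> h' = hs ! (i + 1) \<and>
              hs ! i \<otimes>\<^bsub>G\<^esub> h \<in> interv G leq (inv\<^bsub>G\<^esub> s) \<one>\<^bsub>G\<^esub>))"

end

theory Submission
  imports Defs
begin

locale rlg = group G for G :: "('a,'b) monoid_scheme" (structure) +
  fixes leq :: "'a \<Rightarrow> 'a \<Rightarrow> bool" and s :: 'a
  assumes RL: "right_lgroup G leq" and SU: "strong_order_unit G leq s"
begin

abbreviation mt where "mt x y \<equiv> lmeet G leq x y"

lemma refl: "x \<in> carrier G \<Longrightarrow> leq x x" using RL unfolding right_lgroup_def by blast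
lemma antisym: "x \<in> carrier G \<Longrightarrow> y \<in> carrier G \<Longrightarrow> leq x y \<Longrightarrow> leq y x \<Longrightarrow> x = y"
  using RL unfolding right_lgroup_def by blast
lemma trans: "x \<in> carrier G \<Longrightarrow> y \<in> carrier G \<Longrightarrow> z \<in> carrier G \<Longrightarrow> leq x y \<Longrightarrow> leq y z \<Longrightarrow> leq x z"
  using RL unfolding right_lgroup_def by blast
lemma rmono: "x \<in> carrier G \<Longrightarrow> y \<in> carrier G \<Longrightarrow> z \<in> carrier G \<Longrightarrow> leq x y \<Longrightarrow> leq (x \<otimes> z) (y \<otimes> z)"
  using RL unfolding right_lgroup_def by blast
lemma rmono_iff: "x \<in> carrier G \<Longrightarrow> y \<in> carrier G \<Longrightarrow> z \<in> carrier G \<Longrightarrow> leq (x \<otimes> z) (y \<otimes> z) \<longleftrightarrow> leq x y"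
proof
  assume c: "x \<in> carrier G" "y \<in> carrier G" "z \<in> carrier G" and "leq (x \<otimes> z) (y \<otimes> z)"
  then have "leq (x \<otimes> z \<otimes> inv z) (y \<otimes> z \<otimes> inv z)" by (intro rmono[of "x \<otimes> z"]) auto
  then show "leq x y" using c by (simp add: m_assoc)
qed (rule rmono)

lemma glb_ex: "x \<in> carrier G \<Longrightarrow> y \<in> carrier G \<Longrightarrow> \<exists>z. is_glb G leq x y z"
  using RL unfolding right_lgroup_def by blast

lemma glb_unique: "is_glb G leq x y z1 \<Longrightarrow> is_glb G leq x y z2 \<Longrightarrow> z1 = z2"
  unfolding is_glb_def by (meson antisym)

lemma mt_glb: "x \<in> carrier G \<Longrightarrow> y \<in> carrier G \<Longrightarrow> is_glb G leq x y (mt x y)"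
  unfolding lmeet_def using glb_ex glb_unique by (metis theI)

lemma mt_closed[simp]: "x \<in> carrier G \<Longrightarrow> y \<in> carrier G \<Longrightarrow> mt x y \<in> carrier G"
  using mt_glb unfolding is_glb_def by blast
lemma mt_le1: "x \<in> carrier G \<Longrightarrow> y \<in> carrier G \<Longrightarrow> leq (mt x y) x"
  using mt_glb unfolding is_glb_def by blast
lemma mt_le2: "x \<in> carrier G \<Longrightarrow> y \<in> carrier G \<Longrightarrow> leq (mt x y) y"
  using mt_glb unfolding is_glb_def by blast
lemma mt_greatest: "x \<in> carrier G \<Longrightarrow> y \<in> carrier G \<Longrightarrow> w \<in> carrier G \<Longrightarrow> leq w x \<Longrightarrow> leq w y \<Longrightarrow> leq w (mt x y)"
  using mt_glb unfolding is_glb_def by blast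
lemma mt_eq: "x \<in> carrier G \<Longrightarrow> y \<in> carrier G \<Longrightarrow> z \<in> carrier G \<Longrightarrow> leq z x \<Longrightarrow> leq z y \<Longrightarrow>
   (\<And>w. w \<in> carrier G \<Longrightarrow> leq w x \<Longrightarrow> leq w y \<Longrightarrow> leq w z) \<Longrightarrow> mt x y = z"
  by (meson antisym mt_closed mt_greatest mt_le1 mt_le2 trans)
lemma mt_absorb: "x \<in> carrier G \<Longrightarrow> y \<in> carrier G \<Longrightarrow> leq x y \<Longrightarrow> mt x y = x"
  by (rule mt_eq) (auto intro: refl)
lemma mt_comm: "x \<in> carrier G \<Longrightarrow> y \<in> carrier G \<Longrightarrow> mt x y = mt y x"
  by (rule mt_eq) (auto intro: mt_le1 mt_le2 mt_greatest)
lemma mt_assoc: "x \<in> carrier G \<Longrightarrow> y \<in> carrier G \<Longrightarrow> z \<in> carrier G \<Longrightarrow> mt (mt x y) z = mt x (mt y z)"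
proof (rule mt_eq[symmetric])
  assume c: "x \<in> carrier G" "y \<in> carrier G" "z \<in> carrier G"
  show "leq (mt (mt x y) z) x" using c by (meson mt_closed mt_le1 trans)
  show "leq (mt (mt x y) z) (mt y z)" using c by (meson mt_closed mt_le1 mt_le2 mt_greatest trans)
  fix w assume "w \<in> carrier G" "leq w x" "leq w (mt y z)"
  then show "leq w (mt (mt x y) z)" using c by (meson mt_closed mt_le1 mt_le2 mt_greatest trans)
qed (auto)
lemma le_mt_iff: "x \<in> carrier G \<Longrightarrow> y \<in> carrier G \<Longrightarrow> mt x y = x \<longleftrightarrow> leq x y"
  by (metis mt_absorb mt_le2)
lemma mt_right: "x \<in> carrier G \<Longrightarrow> y \<in> carrier G \<Longrightarrow> z \<in> carrier G \<Longrightarrow> mt (x \<otimes> z) (y \<otimes> z) = mt x y \<otimes> z"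
proof (rule mt_eq)
  fix w assume c: "x \<in> carrier G" "y \<in> carrier G" "z \<in> carrier G" "w \<in> carrier G"
    and "leq w (x \<otimes> z)" "leq w (y \<otimes> z)"
  then have "leq (w \<otimes> inv z \<otimes> z) (x \<otimes> z)" "leq (w \<otimes> inv z \<otimes> z) (y \<otimes> z)" by (simp_all add: m_assoc)
  then have "leq (w \<otimes> inv z) x" "leq (w \<otimes> inv z) y" using c by (simp_all add: rmono_iff)
  then have "leq (w \<otimes> inv z) (mt x y)" using c by (intro mt_greatest) auto
  then have "leq (w \<otimes> inv z \<otimes> z) (mt x y \<otimes> z)" using c by (intro rmono) auto
  then show "leq w (mt x y \<otimes> z)" using c by (simp add: m_assoc)
qed (auto simp: rmono_iff mt_le1 mt_le2)

definition lm where "lm c \<longleftrightarrow> c \<in> carrier G \<and> (\<forall>x\<in>carrier G. \<forall>y\<in>carrier G. c \<otimes> mt x y = mt (c \<otimes> x) (c \<otimes> y))"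

lemma lm_mono: "lm c \<Longrightarrow> x \<in> carrier G \<Longrightarrow> y \<in> carrier G \<Longrightarrow> leq x y \<Longrightarrow> leq (c \<otimes> x) (c \<otimes> y)"
  unfolding lm_def by (metis le_mt_iff m_closed)

lemma lm_inv: assumes "lm c" shows "lm (inv c)"
  unfolding lm_def
proof (intro conjI ballI)
  have c: "c \<in> carrier G" using assms lm_def by auto
  then show "inv c \<in> carrier G" by simp
  fix x y assume xy: "x \<in> carrier G" "y \<in> carrier G"
  have "c \<otimes> mt (inv c \<otimes> x) (inv c \<otimes> y) = mt x y"
    using assms xy c unfolding lm_def by (simp add: m_assoc[symmetric])
  then have "inv c \<otimes> (c \<otimes> mt (inv c \<otimes> x) (inv c \<otimes> y)) = inv c \<otimes> mt x y" by simp
  then show "inv c \<otimes> mt x y = mt (inv c \<otimes> x) (inv c \<otimes> y)"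
    using xy c by (simp add: m_assoc[symmetric])
qed

lemma lm_mult: assumes "lm c" "lm d" shows "lm (c \<otimes> d)"
  using assms unfolding lm_def by (simp add: m_assoc)

lemma lm_one: "lm \<one>" unfolding lm_def by simp

lemma lm_mono_iff: "lm c \<Longrightarrow> x \<in> carrier G \<Longrightarrow> y \<in> carrier G \<Longrightarrow> leq (c \<otimes> x) (c \<otimes> y) \<longleftrightarrow> leq x y"
proof
  assume a: "lm c" "x \<in> carrier G" "y \<in> carrier G" "leq (c \<otimes> x) (c \<otimes> y)"
  have c: "c \<in> carrier G" using a lm_def by auto
  have "leq (inv c \<otimes> (c \<otimes> x)) (inv c \<otimes> (c \<otimes> y))" using a c by (intro lm_mono[of "inv c"] lm_inv) auto
  then show "leq x y" using a c by (simp add: m_assoc[symmetric])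
qed (rule lm_mono)

lemma s_carrier: "s \<in> carrier G" using SU unfolding strong_order_unit_def by auto
lemma lm_s: "lm s"
  using SU unfolding strong_order_unit_def normal_elem_def lm_def by auto
lemma one_le_s: "leq \<one> s" using SU unfolding strong_order_unit_def by auto

lemma lm_pow: "lm (s [^] (n::nat))"
  by (induct n) (auto intro: lm_mult lm_s simp: lm_one)

lemma lm_ipow: "lm (s [^] (i::int))"
proof (cases "i \<ge> 0")
  case True then show ?thesis using lm_pow[of "nat i"] by (metis int_nat_eq int_pow_int)
next
  case False then have "i = - int (nat (-i))" by simp
  then show ?thesis using lm_inv[OF lm_pow[of "nat (-i)"]] s_carrier by (metis int_pow_neg_int)
qed


lemma inv_le_one: "x \<in> carrier G \<Longrightarrow> leq \<one> x \<Longrightarrow> leq (inv x) \<one>"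
  using rmono[of \<one> x "inv x"] by simp
lemma one_le_inv: "x \<in> carrier G \<Longrightarrow> leq x \<one> \<Longrightarrow> leq \<one> (inv x)"
  using rmono[of x \<one> "inv x"] by simp

definition npair where "npair h1 h2 \<longleftrightarrow> mt (inv h2) (s \<otimes> h1) = \<one>"

abbreviation I where "I \<equiv> interv G leq (inv s) \<one>"

lemma I_props: assumes "h \<in> I" shows "h \<in> carrier G" "leq h \<one>" "leq (inv s) h"
   "leq \<one> (s \<otimes> h)" "leq (inv h) s" "leq \<one> (inv h)" "leq (s \<otimes> h) s"
proof -
  show hc: "h \<in> carrier G" "leq h \<one>" "leq (inv s) h" using assms unfolding interv_def by auto
  show a: "leq \<one> (s \<otimes> h)" using lm_mono[OF lm_s, of "inv s" h] hc s_carrier by simp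
  then have "leq (\<one> \<otimes> inv h) (s \<otimes> h \<otimes> inv h)" using hc s_carrier by (intro rmono) auto
  then show "leq (inv h) s" using hc s_carrier by (simp add: m_assoc)
  show "leq \<one> (inv h)" using hc one_le_inv by auto
  show "leq (s \<otimes> h) s" using lm_mono[OF lm_s, of h \<one>] hc s_carrier by simp
qed

lemma cond3_iff: assumes h1: "h1 \<in> I" and h2: "h2 \<in> I"
  shows "(\<not> (\<exists>h\<in>neg_cone G leq. \<exists>h'\<in>neg_cone G leq. h \<noteq> \<one> \<and> h \<otimes> h' = h2 \<and> h1 \<otimes> h \<in> I))
     \<longleftrightarrow> npair h1 h2"
proof
  note P1 = I_props[OF h1] and P2 = I_props[OF h2]
  note sc = s_carrier
  define w where "w = mt (inv h2) (s \<otimes> h1)"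
  have wc: "w \<in> carrier G" using P1 P2 sc w_def by simp
  have w1: "leq \<one> w" unfolding w_def using P1 P2 sc by (intro mt_greatest) auto
  have w2: "leq w (inv h2)" "leq w (s \<otimes> h1)" unfolding w_def using P1 P2 sc by (auto intro: mt_le1 mt_le2)
  {
    assume N: "\<not> (\<exists>h\<in>neg_cone G leq. \<exists>h'\<in>neg_cone G leq. h \<noteq> \<one> \<and> h \<otimes> h' = h2 \<and> h1 \<otimes> h \<in> I)"
    show "npair h1 h2" unfolding npair_def w_def[symmetric]
    proof (rule ccontr)
      assume wn: "w \<noteq> \<one>"
      have a: "inv w \<in> neg_cone G leq" unfolding neg_cone_def using wc w1 inv_le_one by auto
      have "leq (w \<otimes> h2) (inv h2 \<otimes> h2)" using wc P2 w2 by (intro rmono) auto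
      then have b: "w \<otimes> h2 \<in> neg_cone G leq" unfolding neg_cone_def using wc P2 by simp
      have c: "inv w \<noteq> \<one>" using wn wc by simp
      have d: "inv w \<otimes> (w \<otimes> h2) = h2" using wc P2 by (simp add: m_assoc[symmetric])
      have "leq h1 w" using P1 w1 wc by (blast intro: trans)
      then have "leq (h1 \<otimes> inv w \<otimes> w) (\<one> \<otimes> w)" using P1 wc by (simp add: m_assoc)
      then have e1: "leq (h1 \<otimes> inv w) \<one>" using P1 wc rmono_iff by (metis inv_closed m_closed one_closed)
      have "leq (\<one> \<otimes> w) (s \<otimes> h1 \<otimes> inv w \<otimes> w)" using w2 wc P1 sc by (simp add: m_assoc)
      then have "leq \<one> (s \<otimes> h1 \<otimes> inv w)" using rmono_iff wc P1 sc by (metis inv_closed m_closed one_closed)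
      then have "leq (s \<otimes> inv s) (s \<otimes> (h1 \<otimes> inv w))" using sc wc P1(1) by (simp add: m_assoc)
      then have e2: "leq (inv s) (h1 \<otimes> inv w)" using lm_mono_iff[OF lm_s, of "inv s" "h1 \<otimes> inv w"] sc P1(1) wc by simp
      have "h1 \<otimes> inv w \<in> I" using e1 e2 P1 wc unfolding interv_def by auto
      then show False using N a b c d by blast
    qed
  }
  {
    assume np: "npair h1 h2"
    show "\<not> (\<exists>h\<in>neg_cone G leq. \<exists>h'\<in>neg_cone G leq. h \<noteq> \<one> \<and> h \<otimes> h' = h2 \<and> h1 \<otimes> h \<in> I)"
    proof
      assume "\<exists>h\<in>neg_cone G leq. \<exists>h'\<in>neg_cone G leq. h \<noteq> \<one> \<and> h \<otimes> h' = h2 \<and> h1 \<otimes> h \<in> I"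
      then obtain h h' where h: "h \<in> carrier G" "leq h \<one>" and h': "h' \<in> carrier G" "leq h' \<one>"
        and hn: "h \<noteq> \<one>" and hh: "h \<otimes> h' = h2" and hI: "h1 \<otimes> h \<in> I"
        unfolding neg_cone_def by auto
      have "leq (\<one> \<otimes> inv h) (inv h' \<otimes> inv h)" using h h' one_le_inv by (intro rmono) auto
      moreover have "inv h2 = inv h' \<otimes> inv h" using hh h h' by (metis inv_mult_group)
      ultimately have v1: "leq (inv h) (inv h2)" using h by simp
      have "leq \<one> (s \<otimes> (h1 \<otimes> h))" using I_props(4)[OF hI] .
      then have "leq (\<one> \<otimes> inv h) (s \<otimes> (h1 \<otimes> h) \<otimes> inv h)" using h P1 sc by (intro rmono) auto
      then have v2: "leq (inv h) (s \<otimes> h1)" using h P1 sc by (simp add: m_assoc)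
      have "leq (inv h) \<one>" using v1 v2 np unfolding npair_def using h P1 P2 sc mt_greatest
        by (metis inv_closed m_closed)
      then have "inv h = \<one>" using antisym one_le_inv h by auto
      then show False using hn h by simp
    qed
  }
qed

lemma lprod_Cons[simp]: "lprod G (x # xs) = x \<otimes> lprod G xs" by (simp add: lprod_def)
lemma lprod_Nil[simp]: "lprod G [] = \<one>" by (simp add: lprod_def)
lemma lprod_closed: "set xs \<subseteq> carrier G \<Longrightarrow> lprod G xs \<in> carrier G" by (induct xs) auto
lemma lprod_append: "set xs \<subseteq> carrier G \<Longrightarrow> set ys \<subseteq> carrier G \<Longrightarrow> lprod G (xs @ ys) = lprod G xs \<otimes> lprod G ys"
  by (induct xs) (auto simp: m_assoc lprod_closed)

lemma I_carrier: "set hs \<subseteq> I \<Longrightarrow> set hs \<subseteq> carrier G" unfolding interv_def by auto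

lemma lemmaB: "hs \<noteq> [] \<Longrightarrow> set hs \<subseteq> I \<Longrightarrow> (\<forall>i. i + 1 < length hs \<longrightarrow> npair (hs ! i) (hs ! (i+1)))
   \<Longrightarrow> mt (inv (lprod G hs)) s = inv (hd hs)"
proof (induct hs)
  case Nil then show ?case by simp
next
  case (Cons h t)
  note P = I_props[of h] and sc = s_carrier
  have hI: "h \<in> I" using Cons by auto
  show ?case
  proof (cases t)
    case Nil
    then show ?thesis using P[OF hI] sc by (simp add: mt_absorb)
  next
    case (Cons h2 r)
    have tI: "set t \<subseteq> I" using Cons.prems by auto
    have tn: "\<forall>i. i + 1 < length t \<longrightarrow> npair (t ! i) (t ! (i+1))"
    proof (intro allI impI)
      fix i assume "i + 1 < length t"
      then show "npair (t ! i) (t ! (i+1))" using Cons.prems(3)[rule_format, of "Suc i"] by simp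
    qed
    have IH: "mt (inv (lprod G t)) s = inv h2" using Cons.hyps[OF _ tI tn] Cons by simp
    have np: "npair h h2" using Cons.prems(3)[rule_format, of 0] Cons by simp
    define q where "q = inv (lprod G t)"
    have qc: "q \<in> carrier G" using q_def lprod_closed I_carrier tI by simp
    have hc: "h \<in> carrier G" using P hI by simp
    have e1: "inv (lprod G (h # t)) = q \<otimes> inv h" using q_def hc lprod_closed I_carrier tI
      by (simp add: inv_mult_group)
    have e2: "s = s \<otimes> h \<otimes> inv h" using hc sc by (simp add: m_assoc)
    have "mt (q \<otimes> inv h) s = mt (q \<otimes> inv h) (s \<otimes> h \<otimes> inv h)" using e2 by simp
    also have "\<dots> = mt q (s \<otimes> h) \<otimes> inv h" using qc hc sc by (simp add: mt_right)
    also have "mt q (s \<otimes> h) = mt q (mt s (s \<otimes> h))"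
      using mt_comm[of s "s \<otimes> h"] mt_absorb[of "s \<otimes> h" s] P(7)[OF hI] hc sc by simp
    also have "\<dots> = mt (inv h2) (s \<otimes> h)" using qc hc sc IH q_def mt_assoc[of q s "s \<otimes> h"] by simp
    also have "\<dots> = \<one>" using np npair_def by simp
    finally show ?thesis using e1 hc by simp
  qed
qed

end

locale rlg_g = rlg +
  fixes g assumes gc: "g \<in> carrier G" and gle: "leq g \<one>"
begin

definition p where "p = inv g"
definition a where "a j = mt p (s [^] (j::nat))"
definition kk where "kk = (LEAST i::nat. leq p (s [^] i))"

lemma pc[simp]: "p \<in> carrier G" using gc p_def by simp
lemma p1: "leq \<one> p" using gc gle one_le_inv p_def by simp
lemma ac[simp]: "a j \<in> carrier G" using a_def s_carrier by simp

lemma a0: "a 0 = \<one>" unfolding a_def using p1 by (simp add: mt_comm mt_absorb)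

lemma pow_Suc': "s [^] Suc j = s \<otimes> s [^] (j::nat)" by (rule nat_pow_Suc2[OF s_carrier])

lemma S_step: "leq (s [^] (j::nat)) (s [^] Suc j)"
  unfolding pow_Suc' using rmono[OF one_closed s_carrier nat_pow_closed[OF s_carrier, of j] one_le_s] s_carrier
  by simp

lemma S_mono: "i \<le> j \<Longrightarrow> leq (s [^] (i::nat)) (s [^] j)"
proof (induct j rule: dec_induct)
  case base then show ?case using refl s_carrier by simp
next
  case (step n) then show ?case using S_step trans s_carrier by (meson nat_pow_closed)
qed

lemma a_mono: "i \<le> j \<Longrightarrow> leq (a i) (a j)"
proof -
  assume ij: "i \<le> j"
  have sc: "s [^] i \<in> carrier G" "s [^] j \<in> carrier G" using s_carrier by auto
  have "leq (mt p (s [^] i)) (s [^] j)"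
    using trans[OF mt_closed[OF pc sc(1)] sc(1) sc(2) mt_le2[OF pc sc(1)] S_mono[OF ij]] .
  then show ?thesis unfolding a_def using mt_greatest[OF pc sc(2) mt_closed[OF pc sc(1)] mt_le1[OF pc sc(1)]] by simp
qed

lemma a_rec: "a (Suc j) = mt p (s \<otimes> a j)"
proof -
  have sp: "leq p (s \<otimes> p)" using rmono[OF one_closed s_carrier pc one_le_s] by simp
  have "s \<otimes> a j = mt (s \<otimes> p) (s [^] Suc j)" unfolding a_def pow_Suc'
    using lm_s s_carrier unfolding lm_def by simp
  then have "mt p (s \<otimes> a j) = mt (mt p (s \<otimes> p)) (s [^] Suc j)" using s_carrier by (simp add: mt_assoc)
  then show ?thesis using sp s_carrier a_def by (simp add: mt_absorb)
qed

lemma le_iff: "leq (inv (s [^] (i::nat))) g \<longleftrightarrow> leq p (s [^] i)"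
proof -
  have Sc: "s [^] i \<in> carrier G" using s_carrier by simp
  have "leq (inv (s [^] i)) g \<longleftrightarrow> leq (s [^] i \<otimes> inv (s [^] i)) (s [^] i \<otimes> g)"
    using lm_mono_iff[OF lm_pow[of i], of "inv (s [^] i)" g] Sc gc by simp
  also have "\<dots> \<longleftrightarrow> leq (\<one> \<otimes> inv g) (s [^] i \<otimes> g \<otimes> inv g)" using rmono_iff[of \<one> "s [^] i \<otimes> g" "inv g"] Sc gc by (simp del: l_one)
  finally show ?thesis using Sc gc p_def by (simp add: m_assoc)
qed

lemma a_eq_p: "a i = p \<longleftrightarrow> leq p (s [^] i)"
  unfolding a_def using le_mt_iff s_carrier by simp

lemma ex_k: "\<exists>i. leq p (s [^] (i::nat))"
proof -
  have "\<forall>x\<in>carrier G. \<exists>k::int. leq x (s [^] k)" using SU unfolding strong_order_unit_def by simp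
  then obtain k :: int where k: "leq p (s [^] k)" using pc by blast
  show ?thesis
  proof (cases "k \<ge> 0")
    case True
    have "s [^] (int (nat k)) = s [^] nat k" by (rule int_pow_int)
    then have "s [^] k = s [^] nat k" using True by simp
    then show ?thesis using k by metis
  next
    case False
    then have "k = - int (nat (-k))" by simp
    then have "s [^] k = inv (s [^] nat (-k))" using s_carrier int_pow_neg_int[of s "nat (-k)"] by simp
    moreover have "leq (inv (s [^] nat (-k))) \<one>"
      using inv_le_one S_mono[of 0 "nat (-k)"] s_carrier by simp
    ultimately have "leq p \<one>" using k trans[of p "s [^] k" \<one>] s_carrier by simp
    then have "leq p (s [^] (0::nat))" by simp
    then show ?thesis by blast
  qed
qed

lemma kk: "leq p (s [^] kk)" unfolding kk_def using ex_k by (rule LeastI_ex)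

lemma a_const: "kk \<le> j \<Longrightarrow> a j = p"
proof -
  assume "kk \<le> j"
  then have "leq p (s [^] j)" using trans[OF pc _ _ kk S_mono] s_carrier by simp
  then show ?thesis using a_eq_p by simp
qed

lemma a_strict: assumes "i < kk" shows "a i \<noteq> a (Suc i)"
proof
  assume eq: "a i = a (Suc i)"
  have H: "j \<ge> i \<Longrightarrow> a j = a i" for j
  proof (induct j rule: dec_induct)
    case (step n) then have an: "a n = a i" by simp
    have "a (Suc n) = mt p (s \<otimes> a n)" by (rule a_rec)
    also have "\<dots> = mt p (s \<otimes> a i)" using an by simp
    also have "\<dots> = a (Suc i)" by (rule a_rec[symmetric])
    finally show ?case using eq by simp
  qed simp
  have "a (max i kk) = a i" using H[of "max i kk"] by simp
  then have "a i = p" using a_const[of "max i kk"] by simp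
  then have "kk \<le> i" unfolding kk_def using a_eq_p by (simp add: Least_le)
  then show False using assms by simp
qed


definition cl where "cl = map (\<lambda>i. a i \<otimes> inv (a (Suc i))) [0..<kk]"

lemma telescope: "lprod G (map (\<lambda>i. a i \<otimes> inv (a (Suc i))) [m..<m+d]) = a m \<otimes> inv (a (m+d))"
proof (induct d arbitrary: m)
  case 0 then show ?case by simp
next
  case (Suc d)
  have "[m..<m + Suc d] = m # [Suc m..<Suc m + d]" by (simp add: upt_conv_Cons)
  then have "lprod G (map (\<lambda>i. a i \<otimes> inv (a (Suc i))) [m..<m + Suc d])
     = (a m \<otimes> inv (a (Suc m))) \<otimes> (a (Suc m) \<otimes> inv (a (Suc m + d)))" using Suc.hyps[of "Suc m"] by (simp del: upt_Suc)
  also have "\<dots> = a m \<otimes> (inv (a (Suc m)) \<otimes> (a (Suc m) \<otimes> inv (a (Suc m + d))))" by (simp add: m_assoc)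
  also have "\<dots> = a m \<otimes> inv (a (m + Suc d))" by (simp add: m_assoc[symmetric])
  finally show ?case .
qed

lemma cl_len: "length cl = kk" unfolding cl_def by simp
lemma cl_nth: "i < kk \<Longrightarrow> cl ! i = a i \<otimes> inv (a (Suc i))" unfolding cl_def by simp

lemma cl_prod: "lprod G cl = g"
  using telescope[of 0 kk] a0 a_const[of kk] unfolding cl_def by (simp add: p_def gc)

lemma cl_I: assumes "i < kk" shows "a i \<otimes> inv (a (Suc i)) \<in> I"
proof -
  have c: "a i \<in> carrier G" "a (Suc i) \<in> carrier G" "s \<in> carrier G" using s_carrier by auto
  have "leq (a i \<otimes> inv (a (Suc i)) \<otimes> a (Suc i)) (\<one> \<otimes> a (Suc i))"
    using a_mono[of i "Suc i"] c by (simp add: m_assoc)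
  then have e1: "leq (a i \<otimes> inv (a (Suc i))) \<one>" using rmono_iff c by (meson inv_closed m_closed one_closed)
  have "leq (a (Suc i)) (s \<otimes> a i)" using a_rec[of i] c by (simp add: mt_le2)
  then have "leq (\<one> \<otimes> a (Suc i)) (s \<otimes> a i \<otimes> inv (a (Suc i)) \<otimes> a (Suc i))" using c by (simp add: m_assoc)
  then have "leq \<one> (s \<otimes> a i \<otimes> inv (a (Suc i)))" using rmono_iff c by (meson inv_closed m_closed one_closed)
  then have "leq (s \<otimes> inv s) (s \<otimes> (a i \<otimes> inv (a (Suc i))))" using c by (simp add: m_assoc)
  then have e2: "leq (inv s) (a i \<otimes> inv (a (Suc i)))"
    using lm_mono_iff[OF lm_s, of "inv s" "a i \<otimes> inv (a (Suc i))"] c by simp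
  show ?thesis using e1 e2 c unfolding interv_def by auto
qed

lemma cl_ne: assumes "i < kk" shows "a i \<otimes> inv (a (Suc i)) \<noteq> \<one>"
proof
  assume "a i \<otimes> inv (a (Suc i)) = \<one>"
  then have "a i \<otimes> inv (a (Suc i)) \<otimes> a (Suc i) = a (Suc i)" by simp
  then have "a i = a (Suc i)" by (simp add: m_assoc)
  then show False using a_strict assms by simp
qed

lemma cl_np: "npair (a i \<otimes> inv (a (Suc i))) (a (Suc i) \<otimes> inv (a (Suc (Suc i))))"
proof -
  note c = ac s_carrier
  have "s \<otimes> a i \<otimes> inv (a (Suc i)) \<in> carrier G" by (simp add: s_carrier)
  have le: "leq (s \<otimes> a i) (s \<otimes> a (Suc i))" using lm_mono[OF lm_s] a_mono[of i "Suc i"] by simp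
  have m1: "mt (s \<otimes> a (Suc i)) (s \<otimes> a i) = s \<otimes> a i"
    using mt_comm[of "s \<otimes> a (Suc i)" "s \<otimes> a i"] mt_absorb[OF _ _ le] s_carrier by simp
  have "mt (a (Suc (Suc i))) (s \<otimes> a i) = mt p (mt (s \<otimes> a (Suc i)) (s \<otimes> a i))"
    using a_rec[of "Suc i"] mt_assoc[of p "s \<otimes> a (Suc i)" "s \<otimes> a i"] s_carrier by simp
  also have "\<dots> = a (Suc i)" using m1 a_rec[of i] by simp
  finally have m2: "mt (a (Suc (Suc i))) (s \<otimes> a i) = a (Suc i)" .
  have "inv (a (Suc i) \<otimes> inv (a (Suc (Suc i)))) = a (Suc (Suc i)) \<otimes> inv (a (Suc i))"
    by (simp add: inv_mult_group)
  moreover have "s \<otimes> (a i \<otimes> inv (a (Suc i))) = (s \<otimes> a i) \<otimes> inv (a (Suc i))"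
    using s_carrier by (simp add: m_assoc)
  ultimately have "mt (inv (a (Suc i) \<otimes> inv (a (Suc (Suc i))))) (s \<otimes> (a i \<otimes> inv (a (Suc i))))
     = mt (a (Suc (Suc i))) (s \<otimes> a i) \<otimes> inv (a (Suc i))"
    using mt_right[of "a (Suc (Suc i))" "s \<otimes> a i" "inv (a (Suc i))"] s_carrier by simp
  also have "\<dots> = \<one>" using m2 by simp
  finally show ?thesis unfolding npair_def .
qed

lemma lnf_iff: "left_normal_fact G leq s g hs \<longleftrightarrow>
   set hs \<subseteq> I \<and> g = lprod G hs \<and> (\<forall>h\<in>set hs. h \<noteq> \<one>) \<and>
   (\<forall>i. i + 1 < length hs \<longrightarrow> npair (hs ! i) (hs ! (i+1)))"
proof (cases "set hs \<subseteq> I")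
  case True
  have "i + 1 < length hs \<Longrightarrow>
     (\<not> (\<exists>h\<in>neg_cone G leq. \<exists>h'\<in>neg_cone G leq. h \<noteq> \<one> \<and> h \<otimes> h' = hs ! (i+1) \<and> hs ! i \<otimes> h \<in> I))
     \<longleftrightarrow> npair (hs ! i) (hs ! (i+1))" for i
    using cond3_iff[of "hs ! i" "hs ! (i+1)"] True by (simp add: subset_iff)
  then show ?thesis unfolding left_normal_fact_def using True by auto
next
  case False then show ?thesis unfolding left_normal_fact_def by auto
qed

lemma cl_lnf: "left_normal_fact G leq s g cl"
  unfolding lnf_iff
proof (intro conjI)
  show "set cl \<subseteq> I" unfolding cl_def using cl_I by auto
  show "g = lprod G cl" using cl_prod by simp
  show "\<forall>h\<in>set cl. h \<noteq> \<one>" unfolding cl_def using cl_ne by auto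
  show "\<forall>i. i + 1 < length cl \<longrightarrow> npair (cl ! i) (cl ! (i + 1))"
    using cl_np cl_nth cl_len by simp
qed

lemma uniq: assumes "left_normal_fact G leq s g hs"
  shows "length hs = kk \<and> (\<forall>i<kk. hs ! i = a i \<otimes> inv (a (Suc i)))"
proof -
  have HI: "set hs \<subseteq> I" and Hg: "g = lprod G hs" and Hne: "\<forall>h\<in>set hs. h \<noteq> \<one>"
    and Hnp: "\<forall>i. i + 1 < length hs \<longrightarrow> npair (hs ! i) (hs ! (i+1))"
    using assms lnf_iff by auto
  have Hc: "set hs \<subseteq> carrier G" using HI I_carrier by simp
  define n where "n = length hs"
  define P where "P j = inv (lprod G (take j hs))" for j
  have Pc: "P j \<in> carrier G" for j unfolding P_def using Hc lprod_closed
    by (meson inv_closed set_take_subset subset_trans)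
  have hc: "j < n \<Longrightarrow> hs ! j \<in> carrier G" for j using Hc n_def nth_mem by blast
  have step: "mt p (s \<otimes> P j) = inv (hs ! j) \<otimes> P j \<and> P (Suc j) = inv (hs ! j) \<otimes> P j" if jn: "j < n" for j
  proof
    define T where "T = lprod G (take j hs)"
    define D where "D = lprod G (drop j hs)"
    have Tc: "T \<in> carrier G" unfolding T_def using Hc lprod_closed by (meson set_take_subset subset_trans)
    have Dc: "D \<in> carrier G" unfolding D_def using Hc lprod_closed by (meson set_drop_subset subset_trans)
    have "g = T \<otimes> D" unfolding T_def D_def Hg
      using lprod_append[of "take j hs" "drop j hs"] Hc by (metis append_take_drop_id set_drop_subset set_take_subset subset_trans)
    then have pe: "p = inv D \<otimes> inv T" using Tc Dc p_def by (simp add: inv_mult_group)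
    have dne: "drop j hs \<noteq> []" using jn n_def by simp
    have dI: "set (drop j hs) \<subseteq> I" using HI by (meson set_drop_subset subset_trans)
    have dnp: "\<forall>i. i + 1 < length (drop j hs) \<longrightarrow> npair (drop j hs ! i) (drop j hs ! (i+1))"
      using Hnp by (simp add: add.commute add.left_commute)
    have B: "mt (inv D) s = inv (hs ! j)" unfolding D_def using lemmaB[OF dne dI dnp] jn n_def
      by (simp add: hd_drop_conv_nth)
    have "mt p (s \<otimes> P j) = mt (inv D \<otimes> inv T) (s \<otimes> inv T)" using pe P_def T_def by simp
    also have "\<dots> = mt (inv D) s \<otimes> inv T" using mt_right Dc Tc s_carrier by simp
    finally show "mt p (s \<otimes> P j) = inv (hs ! j) \<otimes> P j" using B P_def T_def by simp
    have "take (Suc j) hs = take j hs @ [hs ! j]" using jn n_def by (simp add: take_Suc_conv_app_nth)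
    then have "lprod G (take (Suc j) hs) = T \<otimes> (hs ! j)" unfolding T_def
      using lprod_append[of "take j hs" "[hs ! j]"] Hc hc[OF jn] by (metis lprod_Cons lprod_Nil r_one set_take_subset subset_trans empty_subsetI insert_subset list.set(1) list.set(2))
    then show "P (Suc j) = inv (hs ! j) \<otimes> P j" unfolding P_def T_def using Tc hc[OF jn]
      by (simp add: inv_mult_group T_def)
  qed
  have A: "j \<le> n \<Longrightarrow> a j = P j" for j
  proof (induct j)
    case 0 then show ?case using a0 P_def by simp
  next
    case (Suc j)
    then have "a j = P j" by simp
    then show ?case using a_rec[of j] step[of j] Suc by simp
  qed
  have st: "j < n \<Longrightarrow> a (Suc j) = inv (hs ! j) \<otimes> a j" for j using A[of j] A[of "Suc j"] step[of j] by simp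
  have "a n = p" using A[of n] P_def n_def Hg p_def by simp
  then have "leq p (s [^] n)" using a_eq_p by simp
  then have kn: "kk \<le> n" unfolding kk_def by (rule Least_le)
  have nk: "n = kk"
  proof (rule ccontr)
    assume "n \<noteq> kk"
    then have kl: "kk < n" using kn by simp
    have "a (Suc kk) = a kk" using a_const[of kk] a_const[of "Suc kk"] by simp
    then have "inv (hs ! kk) \<otimes> a kk = a kk" using st[OF kl] by simp
    then have "inv (hs ! kk) = \<one>" using r_cancel_one hc[OF kl] ac by (meson inv_closed)
    then have "hs ! kk = \<one>" using hc[OF kl] by simp
    then show False using Hne kl n_def nth_mem by metis
  qed
  have "i < kk \<Longrightarrow> hs ! i = a i \<otimes> inv (a (Suc i))" for i
  proof -
    assume ik: "i < kk"
    then have "a (Suc i) = inv (hs ! i) \<otimes> a i" using st nk by simp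
    then have "inv (a (Suc i)) = inv (a i) \<otimes> hs ! i" using hc[of i] ik nk by (simp add: inv_mult_group)
    then have "a i \<otimes> inv (a (Suc i)) = a i \<otimes> (inv (a i) \<otimes> hs ! i)" by simp
    then show ?thesis using hc[of i] ik nk by (simp add: m_assoc[symmetric])
  qed
  then show ?thesis using nk n_def by simp
qed

lemma cvee_eq: "cvee G leq g (s [^] (- int j)) = inv (a j)"
  unfolding cvee_def a_def p_def using int_pow_neg_int[OF s_carrier, of j] s_carrier by simp

end

theorem mainTheorem2:
  fixes G :: "('a, 'b) monoid_scheme" and leq :: "'a \<Rightarrow> 'a \<Rightarrow> bool" and s g :: 'a
  assumes "right_lgroup G leq"
    and "strong_order_unit G leq s"
    and "g \<in> neg_cone G leq"
  defines "k \<equiv> LEAST i::nat. leq (s [^]\<^bsub>G\<^esub> (- int i)) g"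
  shows "(\<exists>!hs. left_normal_fact G leq s g hs) \<and>
         (\<forall>hs. left_normal_fact G leq s g hs \<longrightarrow>
            length hs = k \<and>
            (\<forall>i\<in>{1..k}. hs ! (i - 1) =
               inv\<^bsub>G\<^esub> (cvee G leq g (s [^]\<^bsub>G\<^esub> (- int (i - 1))))
                 \<otimes>\<^bsub>G\<^esub> cvee G leq g (s [^]\<^bsub>G\<^esub> (- int i))))"
proof -
  have gr: "group G" using assms(1) unfolding right_lgroup_def by simp
  have "rlg_g G leq s g"
    unfolding rlg_g_def rlg_def rlg_g_axioms_def rlg_axioms_def
    using gr assms(1,2,3) unfolding neg_cone_def by simp
  then interpret R: rlg_g G leq s g .
  have kk: "k = R.kk"
    unfolding k_def R.kk_def using R.le_iff R.int_pow_neg_int[OF R.s_carrier] by simp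
  have U: "length hs = k \<and> (\<forall>i\<in>{1..k}. hs ! (i - 1) =
               inv\<^bsub>G\<^esub> (cvee G leq g (s [^]\<^bsub>G\<^esub> (- int (i - 1))))
                 \<otimes>\<^bsub>G\<^esub> cvee G leq g (s [^]\<^bsub>G\<^esub> (- int i)))"
    if "left_normal_fact G leq s g hs" for hs
  proof -
    have u: "length hs = R.kk" "\<forall>i<R.kk. hs ! i = R.a i \<otimes>\<^bsub>G\<^esub> inv\<^bsub>G\<^esub> (R.a (Suc i))"
      using R.uniq[OF that] by auto
    have "hs ! (i - 1) = inv\<^bsub>G\<^esub> (cvee G leq g (s [^]\<^bsub>G\<^esub> (- int (i - 1))))
                 \<otimes>\<^bsub>G\<^esub> cvee G leq g (s [^]\<^bsub>G\<^esub> (- int i))" if i: "i \<in> {1..k}" for i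
    proof -
      have "i - 1 < R.kk" "Suc (i - 1) = i" using i kk by auto
      then show ?thesis using u(2) R.cvee_eq by (metis R.ac R.inv_inv)
    qed
    then show ?thesis using u kk by simp
  qed
  have "hs = R.cl" if "left_normal_fact G leq s g hs" for hs
    using R.uniq[OF that] R.cl_len R.cl_nth by (metis nth_equalityI)
  then have "\<exists>!hs. left_normal_fact G leq s g hs" using R.cl_lnf by blast
  then show ?thesis using U by blast
qed

end
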